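(* For any partition $\lambda$ with 2-core $\bar\lambda$, the ratio $H_{\mathrm{odd}}(\lambda)/H(\bar\lambda)$ is an integer.
   Context: For a partition $\lambda$, the hook length of a box of its Young diagram is the number of boxes to its right in its row plus the number below it in its column plus one; $H(\lambda)$ is the product of all hook lengths and $H_{\mathrm{odd}}(\lambda)$ the product of the odd hook lengths. The 2-core $\bar\lambda$ is the partition obtained from $\lambda$ by repeatedly removing dominoes ($1\times2$ or $2\times1$ rectangles of boxes) from the Young diagram, such that a Young diagram remains after each removal, until no more removal is possible; it is independent of the choices made. *)

theory Defs
  imports Main
begin

definition is_partition :: "nat list \<Rightarrow> bool" where
  "is_partition lam \<longleftrightarrow> sorted_wrt (\<ge>) lam \<and> 0 \<notin> set lam"

text \<open>Young diagram: boxes (i,j) = (row, column), 0-indexed.\<close>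
definition diagram :: "nat list \<Rightarrow> (nat \<times> nat) set" where
  "diagram lam = {(i, j). i < length lam \<and> j < lam ! i}"

definition hook :: "nat list \<Rightarrow> nat \<times> nat \<Rightarrow> nat" where
  "hook lam b = (case b of (i, j) \<Rightarrow>
      card {k. j < k \<and> (i, k) \<in> diagram lam}
    + card {k. i < k \<and> (k, j) \<in> diagram lam} + 1)"

definition H :: "nat list \<Rightarrow> nat" where
  "H lam = (\<Prod>b\<in>diagram lam. hook lam b)"

definition H_odd :: "nat list \<Rightarrow> nat" where
  "H_odd lam = (\<Prod>b\<in>{b \<in> diagram lam. odd (hook lam b)}. hook lam b)"

definition domino_removal :: "nat list \<Rightarrow> nat list \<Rightarrow> bool" where
  "domino_removal lam mu \<longleftrightarrow> is_partition mu \<and> diagram mu \<subseteq> diagram lam \<and>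
     (\<exists>i j. diagram lam - diagram mu = {(i, j), (i, Suc j)}
          \<or> diagram lam - diagram mu = {(i, j), (Suc i, j)})"

definition is_two_core_of :: "nat list \<Rightarrow> nat list \<Rightarrow> bool" where
  "is_two_core_of mu lam \<longleftrightarrow> domino_removal\<^sup>*\<^sup>* lam mu \<and> \<not> (\<exists>nu. domino_removal mu nu)"

end

theory Submission
  imports Defs
begin

lemma diagram_Sigma: "diagram l = Sigma {..<length l} (\<lambda>i. {..<l!i})"
  by (auto simp: diagram_def)

lemma finite_diagram[simp]: "finite (diagram l)"
  by (simp add: diagram_Sigma)

lemma part_mono: "is_partition l \<Longrightarrow> i \<le> r \<Longrightarrow> r < length l \<Longrightarrow> l!r \<le> l!i"
proof (cases "i = r")
  case False
  assume "is_partition l" "i \<le> r" "r < length l"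
  then have "sorted_wrt (\<ge>) l" "i < r" using False by (auto simp: is_partition_def)
  then show ?thesis using \<open>r < length l\<close> sorted_wrt_nth_less by blast
qed simp

lemma part_pos: "is_partition l \<Longrightarrow> i < length l \<Longrightarrow> 0 < l!i"
proof -
  assume "is_partition l" "i < length l"
  then have "l!i \<in> set l" "0 \<notin> set l" by (auto simp: is_partition_def)
  then show ?thesis by (metis gr0I)
qed

definition bet :: "nat list \<Rightarrow> nat \<Rightarrow> int" where
  "bet l i = int (l!i) - int i"

lemma bet_mono: "is_partition l \<Longrightarrow> r \<le> r' \<Longrightarrow> r' < length l \<Longrightarrow> bet l r' + int (r' - r) \<le> bet l r"
proof -
  assume a: "is_partition l" "r \<le> r'" "r' < length l"
  then have "l!r' \<le> l!r" using part_mono by blast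
  then show ?thesis using a(2) by (simp add: bet_def of_nat_diff)
qed

lemma exist_hook:
  assumes p: "is_partition l" and i: "i < length l" and xn: "x \<notin> bet l ` {..<length l}"
    and xl: "x < bet l i" and xg: "- int (length l) < x"
  shows "\<exists>j. (i,j) \<in> diagram l \<and> hook l (i,j) = nat (bet l i - x)"
proof -
  let ?N = "length l"
  define K where "K = (LEAST r. r \<ge> ?N \<or> bet l r \<le> x)"
  have KN: "K \<le> ?N" unfolding K_def by (rule Least_le) simp
  have F1: "r < ?N \<and> x < bet l r" if "r < K" for r
    using not_less_Least[of r "\<lambda>r. r \<ge> ?N \<or> bet l r \<le> x"] that unfolding K_def by auto
  have K1: "K \<ge> ?N \<or> bet l K \<le> x" unfolding K_def by (rule LeastI[of _ ?N]) simp
  have iK: "i < K"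
  proof (rule ccontr)
    assume "\<not> i < K"
    then have "K \<le> i" by simp
    with i K1 have "bet l K \<le> x" by auto
    moreover have "bet l i \<le> bet l K" using bet_mono[OF p \<open>K \<le> i\<close> i] by simp
    ultimately show False using xl by simp
  qed
  have F2: "bet l r < x" if "K \<le> r" "r < ?N" for r
  proof -
    have "bet l K \<le> x" using K1 that by auto
    moreover have "bet l r \<le> bet l K" using bet_mono[OF p that] by simp
    moreover have "bet l r \<noteq> x" using xn that by auto
    ultimately show ?thesis by simp
  qed
  have jnn: "x + int K - 1 \<ge> 0"
  proof (cases "K = ?N")
    case True then show ?thesis using xg by simp
  next
    case False
    then have "K < ?N" using KN by simp
    then have "bet l K < x" using F2 by simp
    then show ?thesis by (simp add: bet_def)
  qed
  define j where "j = nat (x + int K - 1)"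
  have jint: "int j = x + int K - 1" using jnn j_def by simp
  have rowsK: "(j < l!r) \<longleftrightarrow> r < K" if r: "r < ?N" for r
  proof
    assume "j < l!r"
    show "r < K"
    proof (rule ccontr)
      assume "\<not> r < K"
      then have Kr: "K \<le> r" by simp
      have "l!r \<le> l!K" using part_mono[OF p Kr r] .
      moreover have "bet l K < x" using F2[of K] Kr r by simp
      ultimately show False using \<open>j < l!r\<close> jint by (simp add: bet_def)
    qed
  next
    assume rK: "r < K"
    have K0: "K - 1 < ?N" "r \<le> K - 1" using rK KN by auto
    have "l!(K-1) \<le> l!r" using part_mono[OF p K0(2) K0(1)] .
    moreover have "x < bet l (K-1)" using F1[of "K-1"] rK by simp
    ultimately show "j < l!r" using jint rK by (simp add: bet_def of_nat_diff)
  qed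
  have jl: "j < l!i" using rowsK[OF i] iK by simp
  have leg: "{k. i<k \<and> (k,j) \<in> diagram l} = {i<..<K}"
    using rowsK KN by (auto simp: diagram_def)
  have arm: "{k. j<k \<and> (i,k) \<in> diagram l} = {j<..<l!i}"
    using i by (auto simp: diagram_def)
  have "hook l (i,j) = (l!i - Suc j) + (K - Suc i) + 1"
    unfolding hook_def using leg arm by simp
  also have "\<dots> = nat (bet l i - x)"
    using jl iK jint by (simp add: bet_def)
  finally show ?thesis using jl i by (auto simp: diagram_def)
qed

lemma bet_lt: "is_partition l \<Longrightarrow> r < r' \<Longrightarrow> r' < length l \<Longrightarrow> bet l r' < bet l r"
  using bet_mono[of l r r'] by simp

lemma bet_inj: "is_partition l \<Longrightarrow> inj_on (bet l) {..<length l}"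
proof (rule inj_onI)
  fix x y assume p: "is_partition l" and xy: "x \<in> {..<length l}" "y \<in> {..<length l}" "bet l x = bet l y"
  show "x = y"
  proof (rule linorder_cases[of x y])
    assume "x < y" then show ?thesis using bet_lt[OF p, of x y] xy by simp
  next
    assume "y < x" then show ?thesis using bet_lt[OF p, of y x] xy by simp
  qed
qed

lemma bet_gt: "i < length l \<Longrightarrow> - int (length l) < bet l i"
  by (simp add: bet_def)

lemma interval_card:
  fixes a c :: int
  shows "card {p::int. even (p + c) \<and> a < p \<and> p \<le> a + 2 * int t + 1} \<le> t + (if odd (a + c) then 1 else 0)"
proof (cases "odd (a + c)")
  case True
  have "{p::int. even (p + c) \<and> a < p \<and> p \<le> a + 2 * int t + 1} \<subseteq> (\<lambda>s. a + 2 * int s + 1) ` {..t}"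
  proof
    fix p assume "p \<in> {p::int. even (p + c) \<and> a < p \<and> p \<le> a + 2 * int t + 1}"
    then have p: "even (p + c)" "a < p" "p \<le> a + 2 * int t + 1" by auto
    have "even ((p + c) - (a + c + 1))" using p(1) True by simp
    moreover have "(p + c) - (a + c + 1) = p - a - 1" by simp
    ultimately have ev: "even (p - a - 1)" by simp
    then have eq: "2 * ((p - a - 1) div 2) = p - a - 1" by simp
    have nn: "(p - a - 1) div 2 \<ge> 0" using p(2) by simp
    have le: "(p - a - 1) div 2 \<le> int t" using p(3) eq by linarith
    show "p \<in> (\<lambda>s. a + 2 * int s + 1) ` {..t}"
      by (rule image_eqI[where x = "nat ((p - a - 1) div 2)"]) (use eq nn le in auto)
  qed
  then have "card {p::int. even (p + c) \<and> a < p \<and> p \<le> a + 2 * int t + 1} \<le> card ((\<lambda>s. a + 2 * int s + 1) ` {..t})"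
    by (rule card_mono[rotated]) simp
  also have "\<dots> \<le> card {..t}" by (rule card_image_le) simp
  finally show ?thesis using True by simp
next
  case False
  have "{p::int. even (p + c) \<and> a < p \<and> p \<le> a + 2 * int t + 1} \<subseteq> (\<lambda>s. a + 2 * int s + 2) ` {..<t}"
  proof
    fix p assume "p \<in> {p::int. even (p + c) \<and> a < p \<and> p \<le> a + 2 * int t + 1}"
    then have p: "even (p + c)" "a < p" "p \<le> a + 2 * int t + 1" by auto
    have "even ((p + c) - (a + c) - 2)" using p(1) False by simp
    moreover have "(p + c) - (a + c) - 2 = p - a - 2" by simp
    ultimately have ev: "even (p - a - 2)" by simp
    then have eq: "2 * ((p - a - 2) div 2) = p - a - 2" by simp
    have "p \<noteq> a + 1" using ev by auto
    then have nn: "(p - a - 2) div 2 \<ge> 0" using p(2) eq by linarith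
    have le: "(p - a - 2) div 2 < int t" using p(3) eq by linarith
    show "p \<in> (\<lambda>s. a + 2 * int s + 2) ` {..<t}"
      by (rule image_eqI[where x = "nat ((p - a - 2) div 2)"]) (use eq nn le in auto)
  qed
  then have "card {p::int. even (p + c) \<and> a < p \<and> p \<le> a + 2 * int t + 1} \<le> card ((\<lambda>s. a + 2 * int s + 2) ` {..<t})"
    by (rule card_mono[rotated]) simp
  also have "\<dots> \<le> card {..<t}" by (rule card_image_le) simp
  finally show ?thesis using False by simp
qed

lemma count_lower:
  assumes p: "is_partition l"
  defines "P \<equiv> bet l ` {..<length l}"
  shows "int (card {c \<in> diagram l. hook l c = 2*t+1}) \<ge>
     max 0 (int (card {x\<in>P. odd x}) - int (card {x\<in>P. even x}) - int t - (if even (length l) then 1 else 0))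
   + max 0 (int (card {x\<in>P. even x}) - int (card {x\<in>P. odd x}) - int t - (if odd (length l) then 1 else 0))"
proof -
  let ?N = "length l"
  define h :: int where "h = 2 * int t + 1"
  define Bh where "Bh = {c \<in> diagram l. hook l c = 2*t+1}"
  define Sv where "Sv = {x\<in>P. x - h \<notin> P \<and> - int ?N < x - h}"
  have finP: "finite P" unfolding P_def by simp
  have finB: "finite Bh" unfolding Bh_def by simp
  have "Sv \<subseteq> (\<lambda>c. bet l (fst c)) ` Bh"
  proof
    fix x assume "x \<in> Sv"
    then obtain i where i: "i < ?N" "x = bet l i" and x: "x - h \<notin> P" "- int ?N < x - h"
      unfolding Sv_def P_def by auto
    have "x - h < bet l i" using i h_def by simp
    from exist_hook[OF p i(1) _ this] x obtain j where j: "(i,j) \<in> diagram l" "hook l (i,j) = nat (bet l i - (x - h))"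
      unfolding P_def by blast
    have "hook l (i,j) = 2*t+1" using j(2) i(2) h_def by simp
    then have "(i,j) \<in> Bh" using j(1) unfolding Bh_def by simp
    then show "x \<in> (\<lambda>c. bet l (fst c)) ` Bh" using i(2) by force
  qed
  then have "card Sv \<le> card ((\<lambda>c. bet l (fst c)) ` Bh)" by (rule card_mono[rotated]) (simp add: finB)
  also have "\<dots> \<le> card Bh" by (rule card_image_le[OF finB])
  finally have SB: "card Sv \<le> card Bh" .
  have finS: "finite Sv" using finP unfolding Sv_def by simp
  have Ssplit: "card Sv = card {x\<in>Sv. odd x} + card {x\<in>Sv. even x}"
  proof -
    have "Sv = {x\<in>Sv. odd x} \<union> {x\<in>Sv. even x}" by auto
    moreover have "card ({x\<in>Sv. odd x} \<union> {x\<in>Sv. even x}) = card {x\<in>Sv. odd x} + card {x\<in>Sv. even x}"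
      by (rule card_Un_disjoint) (use finS in auto)
    ultimately show ?thesis by simp
  qed
  have Pgt: "x \<in> P \<Longrightarrow> - int ?N < x" for x unfolding P_def using bet_gt by auto
  have oh: "odd h" unfolding h_def by simp
  have gen: "card {x\<in>P. Q x} \<le> card {x\<in>Sv. Q x} + card {x\<in>P. \<not> Q x}
        + card {x::int. Q x \<and> - int ?N < x \<and> x \<le> - int ?N + h}"
    if Qsh: "\<And>x. Q x \<Longrightarrow> \<not> Q (x - h)" for Q
  proof -
    have "{x\<in>P. Q x} \<subseteq> {x\<in>Sv. Q x} \<union> {x\<in>P. Q x \<and> x - h \<in> P} \<union> {x::int. Q x \<and> - int ?N < x \<and> x \<le> - int ?N + h}"
      using Pgt unfolding Sv_def by force
    then have "card {x\<in>P. Q x} \<le> card ({x\<in>Sv. Q x} \<union> {x\<in>P. Q x \<and> x - h \<in> P} \<union> {x::int. Q x \<and> - int ?N < x \<and> x \<le> - int ?N + h})"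
      by (rule card_mono[rotated]) (use finS finP in simp)
    also have "\<dots> \<le> card {x\<in>Sv. Q x} + card {x\<in>P. Q x \<and> x - h \<in> P} + card {x::int. Q x \<and> - int ?N < x \<and> x \<le> - int ?N + h}"
      by (meson add_le_mono card_Un_le le_refl order_trans)
    also have "card {x\<in>P. Q x \<and> x - h \<in> P} \<le> card {x\<in>P. \<not> Q x}"
    proof (rule card_inj_on_le[where f = "\<lambda>x. x - h"])
      show "inj_on (\<lambda>x. x - h) {x\<in>P. Q x \<and> x - h \<in> P}" by (rule inj_onI) simp
      show "(\<lambda>x. x - h) ` {x\<in>P. Q x \<and> x - h \<in> P} \<subseteq> {x\<in>P. \<not> Q x}" using Qsh by auto
      show "finite {x\<in>P. \<not> Q x}" using finP by simp
    qed
    finally show ?thesis by simp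
  qed
  have go: "card {x\<in>P. odd x} \<le> card {x\<in>Sv. odd x} + card {x\<in>P. \<not> odd x}
        + card {x::int. odd x \<and> - int ?N < x \<and> x \<le> - int ?N + h}"
    by (rule gen) (use oh in simp)
  have ge: "card {x\<in>P. even x} \<le> card {x\<in>Sv. even x} + card {x\<in>P. \<not> even x}
        + card {x::int. even x \<and> - int ?N < x \<and> x \<le> - int ?N + h}"
    by (rule gen) (use oh in simp)
  have io: "card {x::int. odd x \<and> - int ?N < x \<and> x \<le> - int ?N + h} \<le> t + (if even ?N then 1 else 0)"
  proof -
    have "{x::int. odd x \<and> - int ?N < x \<and> x \<le> - int ?N + h} = {p::int. even (p + 1) \<and> - int ?N < p \<and> p \<le> - int ?N + 2 * int t + 1}"
      unfolding h_def by auto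
    moreover have "odd (- int ?N + 1) \<longleftrightarrow> even ?N" by simp
    ultimately show ?thesis using interval_card[of 1 "- int ?N" t] by simp
  qed
  have ie: "card {x::int. even x \<and> - int ?N < x \<and> x \<le> - int ?N + h} \<le> t + (if odd ?N then 1 else 0)"
  proof -
    have "{x::int. even x \<and> - int ?N < x \<and> x \<le> - int ?N + h} = {p::int. even (p + 0) \<and> - int ?N < p \<and> p \<le> - int ?N + 2 * int t + 1}"
      unfolding h_def by auto
    moreover have "odd (- int ?N + 0) \<longleftrightarrow> odd ?N" by simp
    ultimately show ?thesis using interval_card[of 0 "- int ?N" t] by simp
  qed
  have "int (card Bh) \<ge> int (card {x\<in>Sv. odd x}) + int (card {x\<in>Sv. even x})"
    using SB Ssplit by simp
  then show ?thesis unfolding Bh_def[symmetric] using go ge io ie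
    by (simp add: max_def split: if_splits)
qed

definition chk :: "nat list \<Rightarrow> int" where
  "chk l = (\<Sum>c\<in>diagram l. if even (fst c + snd c) then 1 else -1)"

lemma row_sum: "(\<Sum>j<m. (if even ((i::nat) + j) then 1 else -1) :: int) = (if odd m then (if even i then 1 else -1) else 0)"
  by (induction m) auto

lemma alt_sum: "(\<Sum>i<n. (if even (i::nat) then 1 else -1) :: int) = (if odd n then 1 else 0)"
  by (induction n) auto

lemma chk_rows: "chk l = (\<Sum>i<length l. if odd (l!i) then (if even i then 1 else -1) else 0)"
proof -
  have "chk l = (\<Sum>(i,j)\<in>Sigma {..<length l} (\<lambda>i. {..<l!i}). if even (i + j) then 1 else -1)"
    unfolding chk_def diagram_Sigma by (simp add: case_prod_beta)
  also have "\<dots> = (\<Sum>i<length l. \<Sum>j<l!i. if even (i + j) then 1 else -1)"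
    by (rule sum.Sigma[symmetric]) auto
  also have "\<dots> = (\<Sum>i<length l. if odd (l!i) then (if even i then 1 else -1) else 0)"
    by (rule sum.cong[OF refl], rule row_sum)
  finally show ?thesis .
qed

lemma delta_eq: "(\<Sum>i<length l. if odd (bet l i) then 1 else -1 :: int) = 2 * chk l - (if odd (length l) then 1 else 0)"
proof -
  have pt: "(if odd (bet l i) then 1 else -1 :: int) = 2 * (if odd (l!i) then (if even i then 1 else -1) else 0) - (if even i then 1 else -1)" for i
  proof -
    have "odd (bet l i) \<longleftrightarrow> odd (l!i + i)" unfolding bet_def
      by (metis even_diff even_of_nat of_nat_add)
    then show ?thesis by auto
  qed
  have "(\<Sum>i<length l. if odd (bet l i) then 1 else -1 :: int) =
     (\<Sum>i<length l. 2 * (if odd (l!i) then (if even i then 1 else -1) else 0) - (if even i then 1 else -1 :: int))"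
    by (simp only: pt)
  also have "\<dots> = 2 * chk l - (if odd (length l) then 1 else 0)"
    by (simp only: sum_subtractf sum_distrib_left[symmetric] chk_rows alt_sum)
  finally show ?thesis .
qed

lemma card_P:
  assumes p: "is_partition l"
  defines "P \<equiv> bet l ` {..<length l}"
  shows "int (card {x\<in>P. odd x}) - int (card {x\<in>P. even x}) = (\<Sum>i<length l. if odd (bet l i) then 1 else -1)"
proof -
  have inj: "inj_on (bet l) {..<length l}" by (rule bet_inj[OF p])
  have "{x\<in>P. odd x} = bet l ` {i\<in>{..<length l}. odd (bet l i)}" unfolding P_def by auto
  moreover have "{i\<in>{..<length l}. odd (bet l i)} \<subseteq> {..<length l}" by auto
  ultimately have co: "card {x\<in>P. odd x} = card {i\<in>{..<length l}. odd (bet l i)}"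
    using card_image[OF inj_on_subset[OF inj]] by metis
  have "{x\<in>P. even x} = bet l ` {i\<in>{..<length l}. \<not> odd (bet l i)}" unfolding P_def by auto
  moreover have "{i\<in>{..<length l}. \<not> odd (bet l i)} \<subseteq> {..<length l}" by auto
  ultimately have ce: "card {x\<in>P. even x} = card {i\<in>{..<length l}. \<not> odd (bet l i)}"
    using card_image[OF inj_on_subset[OF inj]] by metis
  have "(\<Sum>i<length l. if odd (bet l i) then 1 else -1 :: int) =
      (\<Sum>i\<in>{..<length l} \<inter> {i. odd (bet l i)}. 1) + (\<Sum>i\<in>{..<length l} \<inter> - {i. odd (bet l i)}. -1)"
    by (rule sum.If_cases) simp
  also have "\<dots> = int (card {i\<in>{..<length l}. odd (bet l i)}) - int (card {i\<in>{..<length l}. \<not> odd (bet l i)})"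
    by (simp add: Int_def Compl_eq set_diff_eq)
  finally show ?thesis using co ce by simp
qed

lemma domino_chk:
  assumes d: "domino_removal l m"
  shows "chk l = chk m"
proof -
  let ?f = "\<lambda>c. if even (fst c + snd c) then 1 else -1 :: int"
  have sub: "diagram m \<subseteq> diagram l" using d unfolding domino_removal_def by simp
  have "chk l = sum ?f (diagram l - diagram m) + sum ?f (diagram m)"
    unfolding chk_def by (rule sum.subset_diff[OF sub finite_diagram])
  moreover have "sum ?f (diagram l - diagram m) = 0"
  proof -
    obtain i j where "diagram l - diagram m = {(i, j), (i, Suc j)} \<or> diagram l - diagram m = {(i, j), (Suc i, j)}"
      using d unfolding domino_removal_def by blast
    then show ?thesis by auto
  qed
  ultimately show ?thesis unfolding chk_def by simp
qed

lemma chain_chk: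
  assumes "domino_removal\<^sup>*\<^sup>* l m" "is_partition l"
  shows "chk l = chk m \<and> is_partition m"
  using assms
proof (induction rule: rtranclp_induct)
  case base then show ?case by simp
next
  case (step y z)
  then show ?case using domino_chk[of y z] unfolding domino_removal_def by simp
qed

lemma diagram_Cons: "diagram (x # xs) = {(0, j) | j. j < x} \<union> (\<lambda>(i,j). (Suc i, j)) ` diagram xs"
proof (rule set_eqI)
  fix c :: "nat \<times> nat"
  obtain i j where c: "c = (i, j)" by (cases c)
  show "c \<in> diagram (x # xs) \<longleftrightarrow> c \<in> {(0, j) | j. j < x} \<union> (\<lambda>(i,j). (Suc i, j)) ` diagram xs"
    unfolding c by (cases i) (auto simp: diagram_def)
qed

lemma diagram_filter: "sorted_wrt (\<ge>) xs \<Longrightarrow> diagram (filter (\<lambda>x. 0 < x) xs) = diagram xs"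
proof (induction xs)
  case Nil then show ?case by simp
next
  case (Cons x xs)
  then have s: "sorted_wrt (\<ge>) xs" "\<forall>y\<in>set xs. y \<le> x" by auto
  show ?case
  proof (cases "0 < x")
    case True
    then show ?thesis using Cons.IH[OF s(1)] by (simp add: diagram_Cons)
  next
    case False
    then have "\<forall>y\<in>set (x#xs). y = 0" using s(2) by auto
    then have f: "filter (\<lambda>x. 0 < x) (x # xs) = []" by (simp add: filter_empty_conv)
    have "diagram (x # xs) = {}"
    proof -
      have "(x#xs)!i = 0" if "i < length (x#xs)" for i
        using \<open>\<forall>y\<in>set (x#xs). y = 0\<close> nth_mem[OF that] by blast
      then show ?thesis by (auto simp: diagram_def)
    qed
    then show ?thesis using f by (simp add: diagram_def)
  qed
qed

lemma mk_removal:
  assumes s: "sorted_wrt (\<ge>) xs" and sub: "diagram xs \<subseteq> diagram m"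
    and d: "diagram m - diagram xs = {(i, j), (i, Suc j)} \<or> diagram m - diagram xs = {(i, j), (Suc i, j)}"
  shows "domino_removal m (filter (\<lambda>x. 0 < x) xs)"
proof -
  have "is_partition (filter (\<lambda>x. 0 < x) xs)"
    unfolding is_partition_def using s by (auto simp: sorted_wrt_filter)
  then show ?thesis unfolding domino_removal_def diagram_filter[OF s] using sub d by blast
qed

lemma sorted_nth: "sorted_wrt (\<ge>) xs \<longleftrightarrow> (\<forall>a b. a < b \<longrightarrow> b < length xs \<longrightarrow> xs!b \<le> xs!a)"
  by (simp add: sorted_wrt_iff_nth_less)

lemma stair:
  assumes p: "is_partition m" and nd: "\<not> (\<exists>nu. domino_removal m nu)"
  shows "\<forall>i<length m. m!i = length m - i"
proof -
  define n where "n = length m"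
  define g where "g i = (if i < n then m!i else 0)" for i
  have gmono: "a \<le> b \<Longrightarrow> g b \<le> g a" for a b
    unfolding g_def n_def using part_mono[OF p] by auto
  have gpos: "i < n \<Longrightarrow> 0 < g i" for i unfolding g_def n_def using part_pos[OF p] by auto
  have srt: "sorted_wrt (\<ge>) m" using p unfolding is_partition_def by simp
  define B where "B = {i. i < n \<and> g i \<noteq> g (Suc i) + 1}"
  show ?thesis
  proof (cases "B = {}")
    case True
    have "\<forall>i. i + d = n \<longrightarrow> g i = d" for d
    proof (induction d)
      case 0 then show ?case by (simp add: g_def)
    next
      case (Suc d)
      show ?case
      proof (intro allI impI)
        fix i assume "i + Suc d = n"
        then have "i < n" "Suc i + d = n" by auto
        then show "g i = Suc d" using Suc.IH True unfolding B_def by auto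
      qed
    qed
    note dd = this
    show ?thesis
    proof (intro allI impI)
      fix i assume i: "i < length m"
      have "g i = n - i" using dd[of "n - i"] i unfolding n_def by simp
      then show "m!i = length m - i" using i unfolding g_def n_def by simp
    qed
  next
    case False
    have finB: "finite B" unfolding B_def by simp
    define i where "i = Max B"
    have iB: "i \<in> B" unfolding i_def using Max_in[OF finB False] .
    have iMax: "k \<in> B \<Longrightarrow> k \<le> i" for k unfolding i_def using Max_ge[OF finB] by simp
    have iN: "i < n" and gi: "g i \<noteq> g (Suc i) + 1" using iB unfolding B_def by auto
    have gim: "g (Suc i) \<le> g i" by (rule gmono) simp
    have mi: "m!i = g i" using iN unfolding g_def by simp
    show ?thesis
    proof (cases "g (Suc i) + 2 \<le> g i")
      case True
      define xs where "xs = m[i := m!i - 2]"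
      have lxs: "length xs = n" unfolding xs_def n_def by simp
      have "sorted_wrt (\<ge>) xs" unfolding sorted_nth
      proof (intro allI impI)
        fix a b assume ab: "a < b" "b < length xs"
        then have bn: "b < n" using lxs by simp
        have "m!b \<le> m!a" using srt ab lxs unfolding sorted_nth n_def by simp
        moreover have "i < b \<Longrightarrow> m!b \<le> g (Suc i)" using gmono[of "Suc i" b] bn unfolding g_def by simp
        ultimately show "xs!b \<le> xs!a" unfolding xs_def using True mi ab bn
          by (cases "a = i"; cases "b = i") (auto simp: nth_list_update n_def)
      qed
      moreover have xo: "r \<noteq> i \<Longrightarrow> xs!r = m!r" for r unfolding xs_def by simp
      moreover have xi: "xs!i = m!i - 2" unfolding xs_def using iN n_def by simp
      moreover have "diagram xs \<subseteq> diagram m"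
      proof
        fix c assume "c \<in> diagram xs"
        then obtain r q where c: "c = (r, q)" "r < n" "q < xs!r" using lxs unfolding diagram_def by auto
        then show "c \<in> diagram m" using xo xi unfolding diagram_def n_def by (cases "r = i") auto
      qed
      moreover have "diagram m - diagram xs = {(i, m!i - 2), (i, Suc (m!i - 2))}"
      proof (rule set_eqI)
        fix c :: "nat \<times> nat"
        obtain r q where c: "c = (r, q)" by (cases c)
        show "c \<in> diagram m - diagram xs \<longleftrightarrow> c \<in> {(i, m!i - 2), (i, Suc (m!i - 2))}"
          unfolding c diagram_def using xo xi True mi iN lxs n_def by (cases "r = i") auto
      qed
      ultimately have "domino_removal m (filter (\<lambda>x. 0 < x) xs)" using mk_removal by blast
      then show ?thesis using nd by blast
    next
      case False
      then have eq: "g (Suc i) = g i" using gi gim by simp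
      have Si: "Suc i < n"
      proof (rule ccontr)
        assume "\<not> Suc i < n"
        then have "g (Suc i) = 0" unfolding g_def by simp
        then show False using eq gpos[OF iN] by simp
      qed
      have "Suc i \<notin> B" using iMax by fastforce
      then have nb: "g (Suc i) = g (Suc (Suc i)) + 1" using Si unfolding B_def by simp
      have mSi: "m!(Suc i) = g i" using Si eq unfolding g_def by simp
      define xs where "xs = m[i := m!i - 1, Suc i := m!(Suc i) - 1]"
      have lxs: "length xs = n" unfolding xs_def n_def by simp
      have "sorted_wrt (\<ge>) xs" unfolding sorted_nth
      proof (intro allI impI)
        fix a b assume ab: "a < b" "b < length xs"
        then have bn: "b < n" using lxs by simp
        have "m!b \<le> m!a" using srt ab lxs unfolding sorted_nth n_def by simp
        moreover have "Suc i < b \<Longrightarrow> m!b \<le> g (Suc (Suc i))" using gmono[of "Suc (Suc i)" b] bn unfolding g_def by simp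
        moreover have xv: "xs!r = (if r = i \<or> r = Suc i then m!r - 1 else m!r)" if "r < n" for r
          using that unfolding xs_def n_def by (auto simp: nth_list_update)
        moreover have "a < n" using ab bn by simp
        ultimately show "xs!b \<le> xs!a"
        proof (cases "a = i \<or> a = Suc i")
          case False
          then show ?thesis using xv[OF bn] xv[OF \<open>a < n\<close>] \<open>m!b \<le> m!a\<close>
            by (cases "b = i \<or> b = Suc i") auto
        next
          case True
          have ma: "m!a = g i" using True mi mSi by auto
          show ?thesis
          proof (cases "b = Suc i")
            case True
            then have "a = i" using ab \<open>a = i \<or> a = Suc i\<close> by auto
            then show ?thesis using xv[OF bn] xv[OF \<open>a < n\<close>] True ma mSi by simp
          next
            case False
            then have "Suc i < b" using ab \<open>a = i \<or> a = Suc i\<close> by auto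
            then have "m!b \<le> g i - 1" using \<open>Suc i < b \<Longrightarrow> m!b \<le> g (Suc (Suc i))\<close> nb eq by simp
            moreover have "xs!b = m!b" using xv[OF bn] False \<open>Suc i < b\<close> by simp
            moreover have "xs!a = g i - 1" using xv[OF \<open>a < n\<close>] True ma by simp
            ultimately show ?thesis by simp
          qed
        qed
      qed
      moreover have xo: "r \<noteq> i \<Longrightarrow> r \<noteq> Suc i \<Longrightarrow> xs!r = m!r" for r unfolding xs_def by simp
      moreover have xi: "xs!i = m!i - 1" unfolding xs_def using iN n_def by simp
      moreover have xSi: "xs!(Suc i) = m!(Suc i) - 1" unfolding xs_def using Si n_def by simp
      moreover have "diagram xs \<subseteq> diagram m"
      proof
        fix c assume "c \<in> diagram xs"
        then obtain r q where c: "c = (r, q)" "r < n" "q < xs!r" using lxs unfolding diagram_def by auto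
        then show "c \<in> diagram m" using xo xi xSi unfolding diagram_def n_def
          by (cases "r = i"; cases "r = Suc i") auto
      qed
      moreover have "diagram m - diagram xs = {(i, m!i - 1), (Suc i, m!i - 1)}"
      proof (rule set_eqI)
        fix c :: "nat \<times> nat"
        obtain r q where c: "c = (r, q)" by (cases c)
        have "0 < m!i" using gpos[OF iN] mi by simp
        then show "c \<in> diagram m - diagram xs \<longleftrightarrow> c \<in> {(i, m!i - 1), (Suc i, m!i - 1)}"
          unfolding c diagram_def using xo xi xSi mi mSi iN Si lxs n_def
          by (cases "r = i"; cases "r = Suc i") auto
      qed
      ultimately have "domino_removal m (filter (\<lambda>x. 0 < x) xs)" using mk_removal by blast
      then show ?thesis using nd by blast
    qed
  qed
qed

lemma stair_hook:
  assumes st: "\<forall>i<length m. m!i = length m - i" and c: "(i,j) \<in> diagram m"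
  shows "hook m (i,j) = 2 * (length m - i - j) - 1 \<and> i + j < length m"
proof -
  let ?k = "length m"
  have ij: "i < ?k" "j < ?k - i" using c st unfolding diagram_def by auto
  have arm: "{q. j<q \<and> (i,q) \<in> diagram m} = {j<..<?k-i}"
    using st ij unfolding diagram_def by auto
  have leg: "{r. i<r \<and> (r,j) \<in> diagram m} = {i<..<?k-j}"
    using st ij unfolding diagram_def by auto
  have s: "i + j < ?k" using ij by simp
  have "hook m (i,j) = card {q. j<q \<and> (i,q) \<in> diagram m} + card {r. i<r \<and> (r,j) \<in> diagram m} + 1"
    unfolding hook_def by simp
  then have "hook m (i,j) = (?k - i - Suc j) + (?k - j - Suc i) + 1" unfolding arm leg by simp
  then show ?thesis using s by arith
qed

lemma stair_count:
  assumes st: "\<forall>i<length m. m!i = length m - i"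
  shows "card {c \<in> diagram m. hook m c = v} \<le> (if odd v then length m - v div 2 else 0)"
proof -
  let ?k = "length m"
  let ?t = "v div 2"
  show ?thesis
  proof (cases "odd v")
    case False
    have "{c \<in> diagram m. hook m c = v} = {}"
    proof (rule ccontr)
      assume "{c \<in> diagram m. hook m c = v} \<noteq> {}"
      then obtain i j where ij: "(i,j) \<in> diagram m" "hook m (i,j) = v" by auto
      then have h: "2 * (?k - i - j) - 1 = v" "i + j < ?k" using stair_hook[OF st, of i j] by auto
      then have "odd v" by presburger
      then show False using False by simp
    qed
    then show ?thesis by (simp only: card.empty le0)
  next
    case True
    have "{c \<in> diagram m. hook m c = v} \<subseteq> (\<lambda>a. (a, ?k - 1 - ?t - a)) ` {..<?k - ?t}"
    proof (rule subsetI)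
      fix c assume "c \<in> {c \<in> diagram m. hook m c = v}"
      then obtain i j where cij: "c = (i,j)" "(i,j) \<in> diagram m" "hook m (i,j) = v" by (cases c) auto
      then have h: "2 * (?k - i - j) - 1 = v" "i + j < ?k" using stair_hook[OF st, of i j] by auto
      then have "?k - i - j = ?t + 1" using True by presburger
      then have "j = ?k - 1 - ?t - i" "i < ?k - ?t" using h(2) by auto
      then show "c \<in> (\<lambda>a. (a, ?k - 1 - ?t - a)) ` {..<?k - ?t}" using cij(1) by auto
    qed
    then have "card {c \<in> diagram m. hook m c = v} \<le> card ((\<lambda>a. (a, ?k - 1 - ?t - a)) ` {..<?k - ?t})"
      by (rule card_mono[rotated]) simp
    also have "\<dots> \<le> ?k - ?t" using card_image_le[of "{..<?k - ?t}" "\<lambda>a. (a, ?k - 1 - ?t - a)"] by simp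
    finally show ?thesis using True by (simp only: True not_False_eq_True if_True)
  qed
qed

lemma stair_chk:
  assumes st: "\<forall>i<length m. m!i = length m - i"
  shows "2 * chk m - (if odd (length m) then 1 else 0) = (if odd (length m) then int (length m) else - int (length m))"
proof -
  let ?k = "length m"
  have "(\<Sum>i<?k. if odd (bet m i) then 1 else -1 :: int) = (\<Sum>i<?k. if odd ?k then 1 else -1)"
  proof (rule sum.cong[OF refl])
    fix i assume "i \<in> {..<?k}"
    then have "bet m i = int ?k - 2 * int i" using st by (simp add: bet_def of_nat_diff)
    then show "(if odd (bet m i) then 1 else -1 :: int) = (if odd ?k then 1 else -1)" by simp
  qed
  then show ?thesis using delta_eq[of m] by simp
qed

lemma prod_group:
  fixes g :: "'a \<Rightarrow> nat"
  assumes fin: "finite S" and bd: "\<forall>x\<in>S. g x \<le> M"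
  shows "(\<Prod>x\<in>S. g x) = (\<Prod>v\<in>{..M}. v ^ card {x\<in>S. g x = v})"
proof -
  have "(\<Prod>x\<in>S. g x) = (\<Prod>v\<in>g`S. \<Prod>x\<in>{x. x \<in> S \<and> g x = v}. g x)"
    by (rule prod.image_gen[OF fin])
  also have "\<dots> = (\<Prod>v\<in>g`S. v ^ card {x\<in>S. g x = v})"
  proof (rule prod.cong[OF refl])
    fix v
    have "(\<Prod>x\<in>{x. x \<in> S \<and> g x = v}. g x) = (\<Prod>x\<in>{x. x \<in> S \<and> g x = v}. v)"
      by (rule prod.cong) auto
    then show "(\<Prod>x\<in>{x. x \<in> S \<and> g x = v}. g x) = v ^ card {x\<in>S. g x = v}" by simp
  qed
  also have "\<dots> = (\<Prod>v\<in>{..M}. v ^ card {x\<in>S. g x = v})"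
  proof (rule prod.mono_neutral_left)
    show "finite {..M}" by simp
    show "g ` S \<subseteq> {..M}" using bd by auto
    show "\<forall>v\<in>{..M} - g ` S. v ^ card {x\<in>S. g x = v} = 1"
    proof
      fix v assume "v \<in> {..M} - g ` S"
      then have "{x\<in>S. g x = v} = {}" by auto
      then have "card {x\<in>S. g x = v} = 0" by (simp only: card.empty)
      then show "v ^ card {x\<in>S. g x = v} = 1" by (simp only: power_0)
    qed
  qed
  finally show ?thesis .
qed

theorem corollary3p4:
  fixes lam mu :: "nat list"
  assumes "is_partition lam"
    and "is_two_core_of mu lam"
  shows "H mu dvd H_odd lam"
proof -
  have ch: "domino_removal\<^sup>*\<^sup>* lam mu" and nd: "\<not> (\<exists>nu. domino_removal mu nu)"
    using assms(2) unfolding is_two_core_of_def by auto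
  have cc: "chk lam = chk mu" and pm: "is_partition mu" using chain_chk[OF ch assms(1)] by auto
  have st: "\<forall>i<length mu. mu!i = length mu - i" by (rule stair[OF pm nd])
  let ?k = "length mu"
  have kD: "2 * chk mu - (if odd ?k then 1 else 0) = (if odd ?k then int ?k else - int ?k)"
    by (rule stair_chk[OF st])
  have lower: "int (card {c \<in> diagram lam. hook lam c = 2*t+1}) \<ge> int ?k - int t" for t
  proof -
    define P where "P = bet lam ` {..<length lam}"
    have d: "int (card {x\<in>P. odd x}) - int (card {x\<in>P. even x}) = 2 * chk lam - (if odd (length lam) then 1 else 0)"
      unfolding P_def using card_P[OF assms(1)] delta_eq[of lam] by simp
    have "int (card {c \<in> diagram lam. hook lam c = 2*t+1}) \<ge>
     max 0 (int (card {x\<in>P. odd x}) - int (card {x\<in>P. even x}) - int t - (if even (length lam) then 1 else 0))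
   + max 0 (int (card {x\<in>P. even x}) - int (card {x\<in>P. odd x}) - int t - (if odd (length lam) then 1 else 0))"
      unfolding P_def by (rule count_lower[OF assms(1)])
    then show ?thesis using d cc kD by (auto simp: max_def split: if_splits)
  qed
  define M where "M = (\<Sum>b\<in>diagram lam. hook lam b) + (\<Sum>b\<in>diagram mu. hook mu b)"
  have bl: "\<forall>b\<in>{b \<in> diagram lam. odd (hook lam b)}. hook lam b \<le> M"
  proof
    fix b assume "b \<in> {b \<in> diagram lam. odd (hook lam b)}"
    then have "hook lam b \<le> (\<Sum>b\<in>diagram lam. hook lam b)" by (intro member_le_sum) auto
    then show "hook lam b \<le> M" unfolding M_def by simp
  qed
  have bm: "\<forall>b\<in>diagram mu. hook mu b \<le> M"
  proof
    fix b assume "b \<in> diagram mu"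
    then have "hook mu b \<le> (\<Sum>b\<in>diagram mu. hook mu b)" by (intro member_le_sum) auto
    then show "hook mu b \<le> M" unfolding M_def by simp
  qed
  have Hm: "H mu = (\<Prod>v\<in>{..M}. v ^ card {x\<in>diagram mu. hook mu x = v})"
    unfolding H_def by (rule prod_group[OF finite_diagram bm])
  have Hl: "H_odd lam = (\<Prod>v\<in>{..M}. v ^ card {x\<in>{b \<in> diagram lam. odd (hook lam b)}. hook lam x = v})"
    unfolding H_odd_def by (rule prod_group) (use bl in auto)
  show ?thesis unfolding Hm Hl
  proof (rule prod_dvd_prod, rule le_imp_power_dvd)
    fix v
    show "card {x\<in>diagram mu. hook mu x = v} \<le> card {x\<in>{b \<in> diagram lam. odd (hook lam b)}. hook lam x = v}"
    proof (cases "odd v")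
      case False
      have "card {x\<in>diagram mu. hook mu x = v} = 0" using stair_count[OF st, of v] False
        by (simp only: if_False le_zero_eq)
      then show ?thesis by (simp only: le0)
    next
      case True
      define t where "t = v div 2"
      have v: "v = 2*t+1" using True unfolding t_def by presburger
      have "{x\<in>{b \<in> diagram lam. odd (hook lam b)}. hook lam x = v} = {c \<in> diagram lam. hook lam c = 2*t+1}"
        using v by auto
      moreover have "card {x\<in>diagram mu. hook mu x = v} \<le> ?k - t" using stair_count[OF st, of v] True t_def by simp
      ultimately show ?thesis using lower[of t] by simp
    qed
  qed
qed

end
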